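(* Let $\mathfrak{g}$ be a Lie algebra with two stratifications $$V_1\oplus\dots\oplus V_s=\mathfrak{g}=W_1\oplus\dots\oplus W_t.$$ Then $s=t$ and there exists a Lie algebra automorphism $A:\mathfrak{g}\to\mathfrak{g}$ such that $A(V_i)=W_i$ for all $i\in\{1,\dots,s\}$.
   Context: All Lie algebras are finite-dimensional over $\mathbb R$. For subspaces $V,W$ of a Lie algebra, $[V,W]:=\operatorname{span}\{[X,Y]: X\in V, Y\in W\}$. A stratification of a Lie algebra $\mathfrak{g}$ is a direct-sum decomposition $\mathfrak{g}=V_1\oplus\dots\oplus V_s$ for some integer $s\ge1$ with $V_s\neq\{0\}$ and $[V_1,V_j]=V_{j+1}$ for all $j\in\{1,\dots,s\}$, where $V_{s+1}:=\{0\}$. *)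

theory Defs
  imports "HOL-Analysis.Analysis"
begin

definition lie_algebra :: "('g::real_vector \<Rightarrow> 'g \<Rightarrow> 'g) \<Rightarrow> bool" where
  "lie_algebra br \<longleftrightarrow>
     (\<forall>x. linear (br x)) \<and> (\<forall>y. linear (\<lambda>x. br x y)) \<and>
     (\<forall>x. br x x = 0) \<and>
     (\<forall>x y z. br x (br y z) + br y (br z x) + br z (br x y) = 0)"

definition fin_dim_space :: "'g::real_vector itself \<Rightarrow> bool" where
  "fin_dim_space _ \<longleftrightarrow> (\<exists>B::'g set. finite B \<and> span B = UNIV)"

definition lie_br_sub :: "('g::real_vector \<Rightarrow> 'g \<Rightarrow> 'g) \<Rightarrow> 'g set \<Rightarrow> 'g set \<Rightarrow> 'g set" where
  "lie_br_sub br V W = span {br x y | x y. x \<in> V \<and> y \<in> W}"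

definition direct_sum_decomp :: "(nat \<Rightarrow> 'g::real_vector set) \<Rightarrow> nat \<Rightarrow> bool" where
  "direct_sum_decomp V s \<longleftrightarrow>
     (\<forall>i\<in>{1..s}. subspace (V i)) \<and>
     (\<forall>x. \<exists>v. (\<forall>i\<in>{1..s}. v i \<in> V i) \<and> x = (\<Sum>i=1..s. v i)) \<and>
     (\<forall>v. (\<forall>i\<in>{1..s}. v i \<in> V i) \<and> (\<Sum>i=1..s. v i) = 0 \<longrightarrow> (\<forall>i\<in>{1..s}. v i = 0))"

definition stratification :: "('g::real_vector \<Rightarrow> 'g \<Rightarrow> 'g) \<Rightarrow> (nat \<Rightarrow> 'g set) \<Rightarrow> nat \<Rightarrow> bool" where
  "stratification br V s \<longleftrightarrow>
     s \<ge> 1 \<and> direct_sum_decomp V s \<and> V s \<noteq> {0} \<and>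
     (\<forall>j\<in>{1..s}. lie_br_sub br (V 1) (V j) = (if j = s then {0} else V (j+1)))"

definition lie_automorphism :: "('g::real_vector \<Rightarrow> 'g \<Rightarrow> 'g) \<Rightarrow> ('g \<Rightarrow> 'g) \<Rightarrow> bool" where
  "lie_automorphism br A \<longleftrightarrow> linear A \<and> bij A \<and> (\<forall>x y. A (br x y) = br (A x) (A y))"

end

theory Submission imports Defs begin

lemma subspace_eq_lin:
  assumes "linear f" "linear g"
  shows "subspace {x. f x = g x}"
  using assms unfolding subspace_def
  by (auto simp: linear_0 linear_add linear_scale)

lemma lin_span_mem:
  assumes "linear f" "subspace S" "\<And>x. x \<in> B \<Longrightarrow> f x \<in> S" "x \<in> span B"
  shows "f x \<in> S"
proof -
  have "subspace {x. f x \<in> S}"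
    using linear_subspace_vimage[OF assms(1) assms(2)] by (simp add: vimage_def)
  thus ?thesis using assms(3,4) span_induct[of x B "\<lambda>x. f x \<in> S"] by blast
qed

lemma lin_span_eq:
  assumes "linear f" "linear g" "\<And>x. x \<in> B \<Longrightarrow> f x = g x" "x \<in> span B"
  shows "f x = g x"
  using span_induct[of x B "\<lambda>x. f x = g x"] subspace_eq_lin[OF assms(1,2)] assms(3,4) by blast

locale strat =
  fixes br :: "'a::real_vector \<Rightarrow> 'a \<Rightarrow> 'a" and V :: "nat \<Rightarrow> 'a set" and s :: nat
  assumes lie: "lie_algebra br" and st: "stratification br V s"
begin

lemma lin1: "linear (br x)" using lie unfolding lie_algebra_def by blast
lemma lin2: "linear (\<lambda>x. br x y)" using lie unfolding lie_algebra_def by blast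
lemma alt: "br x x = 0" using lie unfolding lie_algebra_def by blast
lemma jac: "br x (br y z) + br y (br z x) + br z (br x y) = 0" using lie unfolding lie_algebra_def by blast

lemma br_add1: "br (x + y) z = br x z + br y z" using linear_add[OF lin2] by blast
lemma br_add2: "br z (x + y) = br z x + br z y" using linear_add[OF lin1] by blast
lemma br_diff1: "br (x - y) z = br x z - br y z" using linear_diff[OF lin2] by blast
lemma br_diff2: "br z (x - y) = br z x - br z y" using linear_diff[OF lin1] by blast
lemma br_01: "br 0 z = 0" using linear_0[OF lin2] by blast
lemma br_02: "br z 0 = 0" using linear_0[OF lin1] by blast

lemma anti: "br x y = - br y x"
proof -
  have "br (x+y) (x+y) = 0" by (rule alt)
  hence "br x x + br y x + (br x y + br y y) = 0" by (simp add: br_add1 br_add2)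
  thus ?thesis by (simp add: alt add_eq_0_iff)
qed

lemma s1: "s \<ge> 1" using st unfolding stratification_def by blast
lemma dsd: "direct_sum_decomp V s" using st unfolding stratification_def by blast
lemma Vs_ne: "V s \<noteq> {0}" using st unfolding stratification_def by blast
lemma strat_br: "j \<in> {1..s} \<Longrightarrow> lie_br_sub br (V 1) (V j) = (if j = s then {0} else V (j+1))"
  using st unfolding stratification_def by blast
lemma subV: "i \<in> {1..s} \<Longrightarrow> subspace (V i)" using dsd unfolding direct_sum_decomp_def by blast

definition Vx :: "nat \<Rightarrow> 'a set" where "Vx k = (if k \<in> {1..s} then V k else {0})"

lemma subVx: "subspace (Vx k)"
  unfolding Vx_def using subV by (auto simp: subspace_def)

lemma br_V1: assumes "j \<in> {1..s}" "x \<in> V 1" "y \<in> V j" shows "br x y \<in> Vx (1 + j)"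
proof -
  have "br x y \<in> lie_br_sub br (V 1) (V j)"
    unfolding lie_br_sub_def using assms by (auto intro!: span_base)
  thus ?thesis using strat_br[OF assms(1)] assms(1) unfolding Vx_def by (auto split: if_splits)
qed

lemma br_Vx0: "k \<notin> {1..s} \<Longrightarrow> x \<in> Vx k \<Longrightarrow> x = 0" unfolding Vx_def by auto

lemma br_VV: "\<And>j x y. i \<in> {1..s} \<Longrightarrow> j \<in> {1..s} \<Longrightarrow> x \<in> V i \<Longrightarrow> y \<in> V j \<Longrightarrow> br x y \<in> Vx (i + j)"
proof (induction i)
  case 0 then show ?case by simp
next
  case (Suc i)
  show ?case
  proof (cases "i = 0")
    case True then show ?thesis using Suc br_V1 by simp
  next
    case False
    hence i1: "i \<in> {1..s}" and ins: "i \<noteq> s" using Suc.prems by auto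
    have "x \<in> lie_br_sub br (V 1) (V i)" using strat_br[OF i1] ins Suc.prems by simp
    hence xs: "x \<in> span {br a b | a b. a \<in> V 1 \<and> b \<in> V i}" unfolding lie_br_sub_def .
    show ?thesis
    proof (rule lin_span_mem[OF lin2 subVx _ xs])
      fix z assume "z \<in> {br a b | a b. a \<in> V 1 \<and> b \<in> V i}"
      then obtain a b where z: "z = br a b" and a: "a \<in> V 1" and b: "b \<in> V i" by blast
      have eq: "br z y = br a (br b y) - br b (br a y)"
      proof -
        have "br a (br b y) + br b (br y a) + br y (br a b) = 0" by (rule jac)
        moreover have "br y a = - br a y" by (rule anti)
        moreover have "br y (br a b) = - br (br a b) y" by (rule anti)
        moreover have "br b (- br a y) = - br b (br a y)"
          using linear_neg[OF lin1] by blast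
        ultimately show ?thesis unfolding z by (simp add: algebra_simps eq_neg_iff_add_eq_0)
      qed
      have t1: "br a (br b y) \<in> Vx (Suc i + j)"
      proof (cases "i + j \<in> {1..s}")
        case True
        have "br b y \<in> V (i+j)" using Suc.IH[OF i1 Suc.prems(2) b Suc.prems(4)] True unfolding Vx_def by simp
        thus ?thesis using br_V1[OF True a] by simp
      next
        case False
        have "br b y = 0" using br_Vx0[OF False Suc.IH[OF i1 Suc.prems(2) b Suc.prems(4)]] by simp
        thus ?thesis using br_02 subspace_0[OF subVx] by simp
      qed
      have t2: "br b (br a y) \<in> Vx (Suc i + j)"
      proof (cases "1 + j \<in> {1..s}")
        case True
        have "br a y \<in> V (1+j)" using br_V1[OF Suc.prems(2) a Suc.prems(4)] True unfolding Vx_def by simp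
        thus ?thesis using Suc.IH[OF i1 True b] by simp
      next
        case False
        have "br a y = 0" using br_Vx0[OF False br_V1[OF Suc.prems(2) a Suc.prems(4)]] by simp
        thus ?thesis using br_02 subspace_0[OF subVx] by simp
      qed
      show "br z y \<in> Vx (Suc i + j)" unfolding eq using t1 t2 subspace_diff[OF subVx] by blast
    qed
  qed
qed

definition dec :: "'a \<Rightarrow> nat \<Rightarrow> 'a" where
  "dec x = (SOME v. (\<forall>i\<in>{1..s}. v i \<in> V i) \<and> x = (\<Sum>i=1..s. v i))"
definition proj :: "nat \<Rightarrow> 'a \<Rightarrow> 'a" where
  "proj i x = (if i \<in> {1..s} then dec x i else 0)"

lemma dec_prop: "(\<forall>i\<in>{1..s}. dec x i \<in> V i) \<and> x = (\<Sum>i=1..s. dec x i)"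
proof -
  obtain v where "(\<forall>i\<in>{1..s}. v i \<in> V i) \<and> x = (\<Sum>i=1..s. v i)"
    using dsd unfolding direct_sum_decomp_def by blast
  thus ?thesis unfolding dec_def by (rule someI[where P="\<lambda>v. (\<forall>i\<in>{1..s}. v i \<in> V i) \<and> x = (\<Sum>i=1..s. v i)"])
qed

lemma proj_in: "proj i x \<in> Vx i"
  using dec_prop unfolding proj_def Vx_def by auto

lemma proj_inV: "i \<in> {1..s} \<Longrightarrow> proj i x \<in> V i"
  using dec_prop unfolding proj_def by auto

lemma proj_out: "i \<notin> {1..s} \<Longrightarrow> proj i x = 0" unfolding proj_def by auto

lemma sum_proj: "x = (\<Sum>i=1..s. proj i x)"
  using dec_prop[of x] unfolding proj_def by simp

lemma proj_unique:
  assumes "\<forall>i\<in>{1..s}. v i \<in> V i" "x = (\<Sum>i=1..s. v i)" "i \<in> {1..s}"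
  shows "proj i x = v i"
proof -
  let ?w = "\<lambda>i. v i - proj i x"
  have "\<forall>i\<in>{1..s}. ?w i \<in> V i" using assms(1) proj_inV subspace_diff[OF subV] by blast
  moreover have "(\<Sum>i=1..s. ?w i) = 0"
    using assms(2) sum_proj[of x] by (simp add: sum_subtractf)
  moreover have h3: "\<forall>v. (\<forall>i\<in>{1..s}. v i \<in> V i) \<and> (\<Sum>i=1..s. v i) = 0 \<longrightarrow> (\<forall>i\<in>{1..s}. v i = 0)"
    using dsd unfolding direct_sum_decomp_def by blast
  ultimately have "\<forall>i\<in>{1..s}. ?w i = 0" using spec[OF h3, of ?w] by blast
  thus ?thesis using assms(3) by simp
qed

lemma proj_linear: "linear (proj i)"
proof (cases "i \<in> {1..s}")
  case True
  show ?thesis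
  proof (rule linearI)
    fix x y
    show "proj i (x + y) = proj i x + proj i y"
      proof (rule proj_unique[OF _ _ True])
      show "\<forall>i\<in>{1..s}. proj i x + proj i y \<in> V i" using proj_inV subspace_add[OF subV] by blast
      have "x + y = (\<Sum>i=1..s. proj i x) + (\<Sum>i=1..s. proj i y)" using sum_proj[of x] sum_proj[of y] by simp
      thus "x + y = (\<Sum>i=1..s. proj i x + proj i y)" by (simp add: sum.distrib)
    qed
  next
    fix c :: real and x
    show "proj i (c *\<^sub>R x) = c *\<^sub>R proj i x"
      proof (rule proj_unique[OF _ _ True])
      show "\<forall>i\<in>{1..s}. c *\<^sub>R proj i x \<in> V i" using proj_inV subspace_scale[OF subV] by blast
      have "c *\<^sub>R x = c *\<^sub>R (\<Sum>i=1..s. proj i x)" using sum_proj[of x] by simp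
      thus "c *\<^sub>R x = (\<Sum>i=1..s. c *\<^sub>R proj i x)" by (simp add: scaleR_sum_right)
    qed
  qed
next
  case False
  thus ?thesis by (simp add: proj_out linearI)
qed

lemma proj_V: assumes "v \<in> V k" "k \<in> {1..s}" shows "proj i v = (if i = k then v else 0)"
proof (cases "i \<in> {1..s}")
  case True
  show ?thesis
    by (rule proj_unique[OF _ _ True]) (use assms subspace_0[OF subV] in \<open>auto simp: sum.delta\<close>)
next
  case False thus ?thesis using assms proj_out by auto
qed

definition F :: "nat \<Rightarrow> 'a set" where
  "F a = span (\<Union>i\<in>{i. i \<in> {1..s} \<and> a \<le> i}. V i)"

lemma subF: "subspace (F a)" unfolding F_def by simp

lemma V_F: "k \<in> {1..s} \<Longrightarrow> a \<le> k \<Longrightarrow> V k \<subseteq> F a"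
  unfolding F_def by (auto intro!: span_base)

lemma F_big: "a > s \<Longrightarrow> F a = {0}"
proof -
  assume "a > s"
  hence "(\<Union>i\<in>{i. i \<in> {1..s} \<and> a \<le> i}. V i) = {}" by auto
  thus ?thesis unfolding F_def by simp
qed

lemma mem_F: "x \<in> F a \<longleftrightarrow> (\<forall>i\<in>{1..s}. i < a \<longrightarrow> proj i x = 0)"
proof
  assume x: "x \<in> F a"
  show "\<forall>i\<in>{1..s}. i < a \<longrightarrow> proj i x = 0"
  proof (intro ballI impI)
    fix i assume i: "i \<in> {1..s}" "i < a"
    have "proj i x \<in> {0}"
      by (rule lin_span_mem[OF proj_linear _ _ x[unfolded F_def]]) (use i proj_V in auto)
    thus "proj i x = 0" by simp
  qed
next
  assume h: "\<forall>i\<in>{1..s}. i < a \<longrightarrow> proj i x = 0"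
  have "x = (\<Sum>i=1..s. proj i x)" by (rule sum_proj)
  also have "\<dots> \<in> F a" unfolding F_def
  proof (rule span_sum)
    fix i assume i: "i \<in> {1..s}"
    show "proj i x \<in> span (\<Union>i\<in>{i. i \<in> {1..s} \<and> a \<le> i}. V i)"
    proof (cases "i < a")
      case True thus ?thesis using h i by (simp add: span_zero)
    next
      case False thus ?thesis using i proj_inV by (auto intro!: span_base)
    qed
  qed
  finally show "x \<in> F a" .
qed

lemma F1: "F 1 = UNIV" using mem_F by auto
lemma F0: "F 0 = UNIV" using mem_F by auto

lemma F_br: assumes "x \<in> F a" "y \<in> F b" shows "br x y \<in> F (a + b)"
proof (rule lin_span_mem[OF lin2 subF _ assms(1)[unfolded F_def]])
  fix x assume "x \<in> (\<Union>i\<in>{i. i \<in> {1..s} \<and> a \<le> i}. V i)"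
  then obtain i where i: "i \<in> {1..s}" "a \<le> i" "x \<in> V i" by blast
  show "br x y \<in> F (a + b)"
  proof (rule lin_span_mem[OF lin1 subF _ assms(2)[unfolded F_def]])
    fix y assume "y \<in> (\<Union>i\<in>{i. i \<in> {1..s} \<and> b \<le> i}. V i)"
    then obtain j where j: "j \<in> {1..s}" "b \<le> j" "y \<in> V j" by blast
    have "br x y \<in> Vx (i + j)" using br_VV i j by blast
    thus "br x y \<in> F (a + b)"
    proof (cases "i + j \<in> {1..s}")
      case True
      hence "br x y \<in> V (i + j)" using \<open>br x y \<in> Vx (i + j)\<close> unfolding Vx_def by auto
      moreover have "a + b \<le> i + j" using i j by simp
      ultimately show ?thesis using V_F[OF True] by blast
    next
      case False
      thus ?thesis using br_Vx0[OF False \<open>br x y \<in> Vx (i + j)\<close>] subspace_0[OF subF] by simp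
    qed
  qed
qed

lemma F_step: assumes "x \<in> F k" shows "x - proj k x \<in> F (Suc k)"
  unfolding mem_F
proof (intro ballI impI)
  fix i assume i: "i \<in> {1..s}" "i < Suc k"
  have "proj i (x - proj k x) = proj i x - proj i (proj k x)"
    by (rule linear_diff[OF proj_linear])
  also have "\<dots> = 0"
  proof (cases "k \<in> {1..s}")
    case True
    show ?thesis using proj_V[OF proj_inV[OF True] True, of i] assms[unfolded mem_F] i by auto
  next
    case False
    thus ?thesis using proj_out[OF False] assms[unfolded mem_F] i proj_out linear_0[OF proj_linear] by (cases "i = k") auto
  qed
  finally show "proj i (x - proj k x) = 0" .
qed

end

fun lcs :: "('a::real_vector \<Rightarrow> 'a \<Rightarrow> 'a) \<Rightarrow> nat \<Rightarrow> 'a set" where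
  "lcs br 0 = UNIV"
| "lcs br (Suc k) = lie_br_sub br UNIV (lcs br k)"

context strat begin

lemma F_lcs: "F (Suc k) = lcs br k"
proof (induction k)
  case 0 thus ?case using F1 by simp
next
  case (Suc k)
  have "F (Suc (Suc k)) = lie_br_sub br UNIV (F (Suc k))"
  proof
    show "F (Suc (Suc k)) \<subseteq> lie_br_sub br UNIV (F (Suc k))"
      unfolding F_def
    proof (rule span_minimal)
      show "subspace (lie_br_sub br UNIV (span (\<Union>i\<in>{i. i \<in> {1..s} \<and> Suc k \<le> i}. V i)))"
        unfolding lie_br_sub_def by simp
      show "(\<Union>i\<in>{i. i \<in> {1..s} \<and> Suc (Suc k) \<le> i}. V i) \<subseteq> lie_br_sub br UNIV (span (\<Union>i\<in>{i. i \<in> {1..s} \<and> Suc k \<le> i}. V i))"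
      proof
        fix x assume "x \<in> (\<Union>i\<in>{i. i \<in> {1..s} \<and> Suc (Suc k) \<le> i}. V i)"
        then obtain i where i: "i \<in> {1..s}" "Suc (Suc k) \<le> i" "x \<in> V i" by blast
        have j: "i - 1 \<in> {1..s}" "i - 1 \<noteq> s" using i by auto
        have sub: "V (i - 1) \<subseteq> F (Suc k)" using V_F[OF j(1)] i by simp
        have "V i = lie_br_sub br (V 1) (V (i - 1))" using strat_br[OF j(1)] j(2) i by simp
        also have "\<dots> \<subseteq> lie_br_sub br UNIV (F (Suc k))"
          unfolding lie_br_sub_def
        proof (rule span_mono)
          show "{br x y |x y. x \<in> V 1 \<and> y \<in> V (i - 1)} \<subseteq> {br x y |x y. x \<in> UNIV \<and> y \<in> F (Suc k)}"
            using sub by blast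
        qed
        finally show "x \<in> lie_br_sub br UNIV (span (\<Union>i\<in>{i. i \<in> {1..s} \<and> Suc k \<le> i}. V i))"
          using i unfolding F_def by blast
      qed
    qed
  next
    show "lie_br_sub br UNIV (F (Suc k)) \<subseteq> F (Suc (Suc k))"
      unfolding lie_br_sub_def
    proof (rule span_minimal[OF _ subF])
      show "{br x y |x y. x \<in> UNIV \<and> y \<in> F (Suc k)} \<subseteq> F (Suc (Suc k))"
        using F_br[of _ 1 _ "Suc k"] F1 by auto
    qed
  qed
  thus ?case using Suc.IH by simp
qed

end

definition transf :: "(nat \<Rightarrow> 'a \<Rightarrow> 'a) \<Rightarrow> (nat \<Rightarrow> 'a \<Rightarrow> 'a) \<Rightarrow> nat \<Rightarrow> 'a \<Rightarrow> 'a::real_vector" where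
  "transf P Q s x = (\<Sum>i=1..s. Q i (P i x))"

lemma transf_lin: assumes "\<And>i. linear (P i)" "\<And>i. linear (Q i)" shows "linear (transf P Q s)"
proof (rule linearI)
  fix x y show "transf P Q s (x + y) = transf P Q s x + transf P Q s y"
    unfolding transf_def by (simp add: linear_add[OF assms(1)] linear_add[OF assms(2)] sum.distrib)
next
  fix c :: real and x show "transf P Q s (c *\<^sub>R x) = c *\<^sub>R transf P Q s x"
    unfolding transf_def by (simp add: linear_scale[OF assms(1)] linear_scale[OF assms(2)] scaleR_sum_right)
qed

locale two = Vs: strat br V s + Ws: strat br W s for br V W s +
  assumes Feq: "\<And>a. Vs.F a = Ws.F a"
begin

abbreviation "A \<equiv> transf Vs.proj Ws.proj s"
abbreviation "B \<equiv> transf Ws.proj Vs.proj s"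

lemma A_lin: "linear A" by (rule transf_lin[OF Vs.proj_linear Ws.proj_linear])
lemma B_lin: "linear B" by (rule transf_lin[OF Ws.proj_linear Vs.proj_linear])

lemma A_V: assumes "x \<in> V k" "k \<in> {1..s}" shows "A x = Ws.proj k x"
proof -
  have "A x = (\<Sum>i=1..s. if i = k then Ws.proj k x else 0)"
    unfolding transf_def
    by (rule sum.cong) (auto simp: Vs.proj_V[OF assms] linear_0[OF Ws.proj_linear])
  also have "\<dots> = Ws.proj k x" using assms(2) by (simp add: sum.delta)
  finally show ?thesis .
qed

lemma span_all: "x \<in> span (\<Union>i\<in>{i. i \<in> {1..s} \<and> 0 \<le> i}. W i)"
  using Ws.F0 unfolding Ws.F_def by blast

lemma span_allV: "x \<in> span (\<Union>i\<in>{i. i \<in> {1..s} \<and> 0 \<le> i}. V i)"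
  using Vs.F0 unfolding Vs.F_def by blast

lemma B_W: assumes "x \<in> W k" "k \<in> {1..s}" shows "B x = Vs.proj k x"
proof -
  have "B x = (\<Sum>i=1..s. if i = k then Vs.proj k x else 0)"
    unfolding transf_def
    by (rule sum.cong) (auto simp: Ws.proj_V[OF assms] linear_0[OF Vs.proj_linear])
  also have "\<dots> = Vs.proj k x" using assms(2) by (simp add: sum.delta)
  finally show ?thesis .
qed

lemma AB: "A (B w) = w"
proof (rule lin_span_eq[OF _ _ _ span_all, where f="\<lambda>w. A (B w)" and g="\<lambda>w. w"])
  show "linear (\<lambda>w. A (B w))" using linear_compose[OF B_lin A_lin] by (simp add: o_def)
  show "linear (\<lambda>w. w)" by (rule linear_id[unfolded id_def])
  fix w assume "w \<in> (\<Union>i\<in>{i. i \<in> {1..s} \<and> 0 \<le> i}. W i)"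
  then obtain k where k: "k \<in> {1..s}" "w \<in> W k" by blast
  define v where "v = Vs.proj k w"
  have v: "v \<in> V k" unfolding v_def using Vs.proj_inV[OF k(1)] .
  have Bw: "B w = v" unfolding v_def by (rule B_W[OF k(2,1)])
  have Av: "A v = Ws.proj k v" by (rule A_V[OF v k(1)])
  have "w \<in> Vs.F k" using Feq Ws.V_F[OF k(1), of k] k(2) by auto
  hence "w - v \<in> Ws.F (Suc k)" unfolding v_def using Vs.F_step Feq by auto
  hence z: "Ws.proj k (w - v) = 0" using k(1) unfolding Ws.mem_F by auto
  have "Ws.proj k v = Ws.proj k w - Ws.proj k (w - v)" by (simp add: linear_diff[OF Ws.proj_linear])
  also have "\<dots> = w" using z Ws.proj_V[OF k(2,1), of k] by simp
  finally show "A (B w) = w" using Bw Av by simp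
qed

lemma A_img: assumes "k \<in> {1..s}" shows "A ` V k = W k"
proof
  show "A ` V k \<subseteq> W k" using A_V[OF _ assms] Ws.proj_inV[OF assms] by auto
  show "W k \<subseteq> A ` V k"
  proof
    fix w assume w: "w \<in> W k"
    have "B w \<in> V k" using B_W[OF w assms] Vs.proj_inV[OF assms] by simp
    thus "w \<in> A ` V k" using AB[of w] by (metis image_eqI)
  qed
qed

lemma A_hom_VV: assumes i: "i \<in> {1..s}" and j: "j \<in> {1..s}" and x: "x \<in> V i" and y: "y \<in> V j"
  shows "A (br x y) = br (A x) (A y)"
proof -
  define a where "a = A x"
  define b where "b = A y"
  have a: "a = Ws.proj i x" unfolding a_def by (rule A_V[OF x i])
  have b: "b = Ws.proj j y" unfolding b_def by (rule A_V[OF y j])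
  have xF: "x \<in> Ws.F i" using Feq Vs.V_F[OF i, of i] x by auto
  have yF: "y \<in> Ws.F j" using Feq Vs.V_F[OF j, of j] y by auto
  have xa: "x - a \<in> Ws.F (Suc i)" using Ws.F_step[OF xF] a by simp
  have yb: "y - b \<in> Ws.F (Suc j)" using Ws.F_step[OF yF] b by simp
  have aW: "a \<in> W i" using a Ws.proj_inV[OF i] by simp
  have bW: "b \<in> W j" using b Ws.proj_inV[OF j] by simp
  have aF: "a \<in> Ws.F i" using Ws.V_F[OF i, of i] aW by auto
  have "br x y - br a b = br (x - a) y + br a (y - b)"
    by (simp add: Ws.br_diff1 Ws.br_diff2)
  moreover have "br (x - a) y \<in> Ws.F (Suc (i + j))" using Ws.F_br[OF xa yF] by simp
  moreover have "br a (y - b) \<in> Ws.F (Suc (i + j))" using Ws.F_br[OF aF yb] by simp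
  ultimately have d: "br x y - br a b \<in> Ws.F (Suc (i + j))"
    using subspace_add[OF Ws.subF] by metis
  have Vxy: "br x y \<in> Vs.Vx (i + j)" by (rule Vs.br_VV[OF i j x y])
  have Wab: "br a b \<in> Ws.Vx (i + j)" by (rule Ws.br_VV[OF i j aW bW])
  show ?thesis
  proof (cases "i + j \<in> {1..s}")
    case True
    have xyV: "br x y \<in> V (i + j)" using Vxy True unfolding Vs.Vx_def by simp
    have abW: "br a b \<in> W (i + j)" using Wab True unfolding Ws.Vx_def by simp
    have "A (br x y) = Ws.proj (i + j) (br x y)" by (rule A_V[OF xyV True])
    also have "\<dots> = Ws.proj (i + j) (br a b) + Ws.proj (i + j) (br x y - br a b)"
      by (simp add: linear_diff[OF Ws.proj_linear])
    also have "Ws.proj (i + j) (br x y - br a b) = 0" using d True unfolding Ws.mem_F by auto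
    also have "Ws.proj (i + j) (br a b) = br a b" using Ws.proj_V[OF abW True] by simp
    finally show ?thesis unfolding a_def b_def by simp
  next
    case False
    have "br x y = 0" by (rule Vs.br_Vx0[OF False Vxy])
    moreover have "br a b = 0" by (rule Ws.br_Vx0[OF False Wab])
    ultimately show ?thesis using linear_0[OF A_lin] unfolding a_def b_def by simp
  qed
qed

lemma A_hom: "A (br x y) = br (A x) (A y)"
proof (rule lin_span_eq[OF _ _ _ span_allV, where f="\<lambda>x. A (br x y)" and g="\<lambda>x. br (A x) (A y)"])
  show "linear (\<lambda>x. A (br x y))" using linear_compose[OF Vs.lin2 A_lin] by (simp add: o_def)
  show "linear (\<lambda>x. br (A x) (A y))" using linear_compose[OF A_lin Vs.lin2] by (simp add: o_def)
  fix x assume "x \<in> (\<Union>i\<in>{i. i \<in> {1..s} \<and> 0 \<le> i}. V i)"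
  then obtain i where i: "i \<in> {1..s}" "x \<in> V i" by blast
  show "A (br x y) = br (A x) (A y)"
  proof (rule lin_span_eq[OF _ _ _ span_allV, where f="\<lambda>y. A (br x y)" and g="\<lambda>y. br (A x) (A y)"])
    show "linear (\<lambda>y. A (br x y))" using linear_compose[OF Vs.lin1 A_lin] by (simp add: o_def)
    show "linear (\<lambda>y. br (A x) (A y))" using linear_compose[OF A_lin Vs.lin1] by (simp add: o_def)
    fix y assume "y \<in> (\<Union>i\<in>{i. i \<in> {1..s} \<and> 0 \<le> i}. V i)"
    then obtain j where j: "j \<in> {1..s}" "y \<in> V j" by blast
    show "A (br x y) = br (A x) (A y)" by (rule A_hom_VV[OF i(1) j(1) i(2) j(2)])
  qed
qed

end

theorem mainTheorem2:
  fixes br :: "'g::real_vector \<Rightarrow> 'g \<Rightarrow> 'g"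
    and V W :: "nat \<Rightarrow> 'g set" and s t :: nat
  assumes "lie_algebra br"
    and "fin_dim_space TYPE('g)"
    and "stratification br V s"
    and "stratification br W t"
  shows "s = t \<and> (\<exists>A. lie_automorphism br A \<and> (\<forall>i\<in>{1..s}. A ` V i = W i))"
proof -
  interpret Vs: strat br V s using assms(1,3) by (rule strat.intro)
  interpret Ws: strat br W t using assms(1,4) by (rule strat.intro)
  have Feq: "Vs.F a = Ws.F a" for a
  proof (cases a)
    case 0 thus ?thesis using Vs.F0 Ws.F0 by simp
  next
    case (Suc k) thus ?thesis using Vs.F_lcs Ws.F_lcs by simp
  qed
  have st: "s = t"
  proof (rule ccontr)
    assume "s \<noteq> t"
    hence "s < t \<or> t < s" by arith
    thus False
    proof
      assume "s < t"
      hence "Vs.F t = {0}" by (rule Vs.F_big)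
      moreover have "W t \<subseteq> Ws.F t" using Ws.V_F[of t t] Ws.s1 by simp
      ultimately show False using Feq[of t] Ws.Vs_ne Ws.subV[of t] Ws.s1 subspace_0 by auto
    next
      assume "t < s"
      hence "Ws.F s = {0}" by (rule Ws.F_big)
      moreover have "V s \<subseteq> Vs.F s" using Vs.V_F[of s s] Vs.s1 by simp
      ultimately show False using Feq[of s] Vs.Vs_ne Vs.subV[of s] Vs.s1 subspace_0 by auto
    qed
  qed
  interpret T1: two br V W s
    using assms(1,3) assms(4)[folded st] Feq[folded st] by (intro two.intro two_axioms.intro strat.intro) auto
  interpret T2: two br W V s
    using assms(1,3) assms(4)[folded st] Feq[folded st] by (intro two.intro two_axioms.intro strat.intro) auto
  have "lie_automorphism br T1.A"
    unfolding lie_automorphism_def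
  proof (intro conjI allI)
    show "linear T1.A" by (rule T1.A_lin)
    show "bij T1.A" by (rule o_bij[of T1.B]) (use T1.AB T2.AB in \<open>auto simp: o_def\<close>)
    fix x y show "T1.A (br x y) = br (T1.A x) (T1.A y)" by (rule T1.A_hom)
  qed
  thus ?thesis using st T1.A_img by blast
qed

end
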